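(* Let $\mathbf{x}_1,\dots,\mathbf{x}_n\in\mathbb{R}^p$ be observations with labels $y_i\in\{-1,1\}$, let $I_+=\{i: y_i=1\}$, $I_-=\{i:y_i=-1\}$, $n_+=|I_+|$, $n_-=|I_-|$, let $\lambda>0$, and let $\mathbf{K}\in\mathbb{R}^{n\times n}$ be the kernel matrix with entries $\mathbf{K}_{lm}=K(\mathbf{x}_l,\mathbf{x}_m)$ for a positive definite kernel $K$, with $\mathbf{k}_i$ denoting the $i$th column of $\mathbf{K}$. Suppose $\mathbf{K}=\mathbf{V}\mathbf{V}^\top$ for a real matrix $\mathbf{V}$, and let $\mathbf{v}_i$ denote the $i$th row of $\mathbf{V}$. Then the kernel ROC-SVM problem $$\min_{\boldsymbol{\theta}\in\mathbb{R}^n}\ \frac{1}{n_+n_-}\sum_{i\in I_+}\sum_{j\in I_-}\big[1-\boldsymbol{\theta}^\top(\mathbf{k}_i-\mathbf{k}_j)\big]_+ +\frac{\lambda}{2}\boldsymbol{\theta}^\top\mathbf{K}\boldsymbol{\theta}$$ is equivalent to solving the linear ROC-SVM problem $$\min_{\boldsymbol{\beta}}\ \frac{1}{n_+n_-}\sum_{i\in I_+}\sum_{j\in I_-}\big[1-\boldsymbol{\beta}^\top(\mathbf{v}_i-\mathbf{v}_j)\big]_+ +\frac{\lambda}{2}\boldsymbol{\beta}^\top\boldsymbol{\beta}.$$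
   Context: $[z]_+=\max\{z,0\}$. The first problem arises from the ROC-SVM $\min_{f\in\mathcal{H}_K}\frac{1}{n_+n_-}\sum_{i\in I_+}\sum_{j\in I_-}[1-\{f(\mathbf{x}_i)-f(\mathbf{x}_j)\}]_++\frac{\lambda}{2}\|f\|^2_{\mathcal{H}_K}$ by writing $f(\mathbf{x})=\alpha+\sum_{k=1}^n\theta_kK(\mathbf{x},\mathbf{x}_k)$, where $\mathcal{H}_K$ is the reproducing kernel Hilbert space of $K$ (the intercept $\alpha$ cancels in differences). *)

theory Defs
  imports "HOL-Analysis.Analysis"
begin

text \<open>Positive (semi)definite kernel in the machine-learning sense: symmetric and
  every Gram matrix is positive semidefinite.\<close>
definition pd_kernel :: "('a \<Rightarrow> 'a \<Rightarrow> real) \<Rightarrow> bool" where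
  "pd_kernel Kf \<longleftrightarrow> (\<forall>a b. Kf a b = Kf b a) \<and>
     (\<forall>(m::nat) (z::nat \<Rightarrow> 'a) (c::nat \<Rightarrow> real).
        0 \<le> (\<Sum>i<m. \<Sum>j<m. c i * c j * Kf (z i) (z j)))"

definition hinge :: "real \<Rightarrow> real" where
  "hinge z = max z 0"

definition Ipos :: "('n \<Rightarrow> real) \<Rightarrow> 'n set" where
  "Ipos y = {i. y i = 1}"

definition Ineg :: "('n \<Rightarrow> real) \<Rightarrow> 'n set" where
  "Ineg y = {i. y i = -1}"

definition kernel_roc_obj ::
  "('n::finite \<Rightarrow> real) \<Rightarrow> real \<Rightarrow> real^'n^'n \<Rightarrow> real^'n \<Rightarrow> real" where
  "kernel_roc_obj y lam K \<theta> =
     1 / (real (card (Ipos y)) * real (card (Ineg y))) *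
       (\<Sum>i\<in>Ipos y. \<Sum>j\<in>Ineg y. hinge (1 - \<theta> \<bullet> (column i K - column j K)))
     + lam / 2 * (\<theta> \<bullet> (K *v \<theta>))"

definition linear_roc_obj ::
  "('n::finite \<Rightarrow> real) \<Rightarrow> real \<Rightarrow> real^'r^'n \<Rightarrow> real^'r \<Rightarrow> real" where
  "linear_roc_obj y lam V \<beta> =
     1 / (real (card (Ipos y)) * real (card (Ineg y))) *
       (\<Sum>i\<in>Ipos y. \<Sum>j\<in>Ineg y. hinge (1 - \<beta> \<bullet> (row i V - row j V)))
     + lam / 2 * (\<beta> \<bullet> \<beta>)"

end

theory Submission
  imports Defs
begin

lemma col_aux: "column i (V ** transpose V) = V *v row i (V::real^'r^'n)"
  by (simp add: vec_eq_iff matrix_matrix_mult_def matrix_vector_mult_def column_def row_def transpose_def)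

lemma rowv_aux: "(V *v z) $ i = row i V \<bullet> (z::real^'r)"
  by (simp add: matrix_vector_mult_def row_def inner_vec_def mult.commute)

lemma tv_aux: "transpose V *v \<theta> = \<theta> v* (V::real^'r^'n)"
  by (metis vector_transpose_matrix transpose_transpose)

lemma inner_tv: "(transpose V *v \<theta>) \<bullet> r = \<theta> \<bullet> ((V::real^'r^'n) *v r)"
  by (simp add: tv_aux dot_lmul_matrix)

lemma decomp_aux:
  fixes V :: "real^'r^'n"
  shows "\<exists>\<theta> w. \<beta> = transpose V *v \<theta> + w \<and> V *v w = 0"
proof -
  let ?S = "range (\<lambda>\<theta>. transpose V *v \<theta>)"
  have sub: "subspace ?S"
    by (rule linear_subspace_image[OF matrix_vector_mul_linear subspace_UNIV])
  obtain a z where a: "a \<in> span ?S" and z: "\<And>w. w \<in> span ?S \<Longrightarrow> orthogonal z w"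
      and b: "\<beta> = a + z"
    using orthogonal_subspace_decomp_exists[of ?S \<beta>] by blast
  have "a \<in> ?S" using a span_eq_iff[of ?S] sub by metis
  then obtain \<theta> where th: "a = transpose V *v \<theta>" by blast
  have "transpose V *v (V *v z) \<in> span ?S" by (intro span_base) auto
  then have "orthogonal z (transpose V *v (V *v z))" by (rule z)
  then have "(V *v z) \<bullet> (V *v z) = 0"
    using inner_tv[of V "V *v z" z] inner_commute[of z "transpose V *v (V *v z)"]
    unfolding orthogonal_def by simp
  then have "V *v z = 0" by simp
  with b th show ?thesis by blast
qed

lemma lin_split:
  fixes V :: "real^'r^'n"
  assumes "V *v w = 0"
  shows "linear_roc_obj y lam V (transpose V *v \<theta> + w) =
         linear_roc_obj y lam V (transpose V *v \<theta>) + lam / 2 * (w \<bullet> w)"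
proof -
  have r: "row i V \<bullet> w = 0" for i using assms rowv_aux[of V w i] by simp
  have h: "(transpose V *v \<theta> + w) \<bullet> (row i V - row j V) = (transpose V *v \<theta>) \<bullet> (row i V - row j V)" for i j
    using r[of i] r[of j] by (simp add: inner_add_left inner_diff_right inner_add_right inner_commute[of w])
  have aw: "(transpose V *v \<theta>) \<bullet> w = 0" using assms by (metis dot_lmul_matrix tv_aux inner_zero_right)
  have sq: "(transpose V *v \<theta> + w) \<bullet> (transpose V *v \<theta> + w) = (transpose V *v \<theta>) \<bullet> (transpose V *v \<theta>) + w \<bullet> w"
    using aw by (simp add: inner_add_left inner_add_right inner_commute)
  show ?thesis unfolding linear_roc_obj_def h sq by (simp add: algebra_simps)
qed

lemma ker_eq:
  fixes V :: "real^'r^'n"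
  shows "kernel_roc_obj y lam (V ** transpose V) \<theta> = linear_roc_obj y lam V (transpose V *v \<theta>)"
proof -
  have h: "\<theta> \<bullet> (column i (V ** transpose V) - column j (V ** transpose V)) = (transpose V *v \<theta>) \<bullet> (row i V - row j V)" for i j
    by (simp add: col_aux tv_aux dot_lmul_matrix matrix_vector_mult_diff_distrib inner_diff_right)
  have q: "\<theta> \<bullet> ((V ** transpose V) *v \<theta>) = (transpose V *v \<theta>) \<bullet> (transpose V *v \<theta>)"
    by (metis dot_lmul_matrix matrix_vector_mul_assoc tv_aux)
  show ?thesis unfolding kernel_roc_obj_def linear_roc_obj_def h q ..
qed

theorem proposition1:
  fixes x :: "'n::finite \<Rightarrow> real^'p"
    and y :: "'n \<Rightarrow> real"
    and lam :: real
    and Kf :: "real^'p \<Rightarrow> real^'p \<Rightarrow> real"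
    and K :: "real^'n^'n"
    and V :: "real^'r^'n"
  assumes labels: "\<forall>i. y i \<in> {-1, 1}"
    and lam_pos: "lam > 0"
    and pd: "pd_kernel Kf"
    and K_def: "\<forall>l m. K $ l $ m = Kf (x l) (x m)"
    and factor: "K = V ** transpose V"
  shows "(\<forall>\<theta>. kernel_roc_obj y lam K \<theta> = linear_roc_obj y lam V (transpose V *v \<theta>))
    \<and> (\<forall>\<theta>. (\<forall>\<theta>'. kernel_roc_obj y lam K \<theta> \<le> kernel_roc_obj y lam K \<theta>')
            \<longleftrightarrow> (\<forall>\<beta>. linear_roc_obj y lam V (transpose V *v \<theta>) \<le> linear_roc_obj y lam V \<beta>))
    \<and> (\<forall>\<beta>. (\<forall>\<beta>'. linear_roc_obj y lam V \<beta> \<le> linear_roc_obj y lam V \<beta>')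
            \<longrightarrow> (\<exists>\<theta>. \<beta> = transpose V *v \<theta>))"
proof -
  have E: "kernel_roc_obj y lam K \<theta> = linear_roc_obj y lam V (transpose V *v \<theta>)" for \<theta>
    using ker_eq factor by simp
  have G: "\<exists>\<theta>'. linear_roc_obj y lam V (transpose V *v \<theta>') \<le> linear_roc_obj y lam V \<beta>" for \<beta>
  proof -
    obtain \<theta>' w where b: "\<beta> = transpose V *v \<theta>' + w" and w: "V *v w = 0"
      using decomp_aux by blast
    have "0 \<le> lam / 2 * (w \<bullet> w)" using lam_pos by simp
    then show ?thesis using lin_split[OF w, of y lam \<theta>'] b by (intro exI[of _ \<theta>']) simp
  qed
  have P2: "(\<forall>\<theta>'. kernel_roc_obj y lam K \<theta> \<le> kernel_roc_obj y lam K \<theta>')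
            \<longleftrightarrow> (\<forall>\<beta>. linear_roc_obj y lam V (transpose V *v \<theta>) \<le> linear_roc_obj y lam V \<beta>)" for \<theta>
    unfolding E using G by (meson order_trans)
  have P3: "\<exists>\<theta>. \<beta> = transpose V *v \<theta>"
    if m: "\<forall>\<beta>'. linear_roc_obj y lam V \<beta> \<le> linear_roc_obj y lam V \<beta>'" for \<beta>
  proof -
    obtain \<theta>' w where b: "\<beta> = transpose V *v \<theta>' + w" and w: "V *v w = 0"
      using decomp_aux by blast
    have "linear_roc_obj y lam V \<beta> \<le> linear_roc_obj y lam V (transpose V *v \<theta>')" using m by blast
    then have "lam / 2 * (w \<bullet> w) \<le> 0" using lin_split[OF w, of y lam \<theta>'] b by simp
    then have "w \<bullet> w \<le> 0" using lam_pos by (simp add: mult_le_0_iff)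
    then have "w = 0" by (metis antisym inner_ge_zero inner_eq_zero_iff)
    with b show ?thesis by auto
  qed
  show ?thesis using E P2 P3 by blast
qed

end
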